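(* Let $\alpha>0$ and let $\Phi:[0,\tfrac14]\to[0,\infty)$ be a bounded measurable function, continuous at $\tfrac14$, with $\Phi(\tfrac14)\neq0$; if $\alpha=1$ assume moreover that $\Phi$ is $\beta$-Hölder on $[0,\tfrac14]$ for some $\beta>0$. Then the function $$f(\lambda_1,\lambda_2)=\frac{\sigma_\varepsilon^2}{4\pi^2}\int_0^{1/4}\frac{\Phi(x)\,(\tfrac14-x)^{\alpha}}{\bigl(1-2x(\cos\lambda_1+\cos\lambda_2)\bigr)^2}\,dx$$ (with $\sigma_\varepsilon^2>0$) is integrable on $[-\pi,\pi]^2$. Equivalently, if $\theta$ is a random variable with probability density $\Phi(x)(\tfrac14-x)^\alpha$ on $[0,\tfrac14]$, then $$E\int_{[-\pi,\pi]^2}\bigl|1-\theta(e^{i\lambda_1}+e^{-i\lambda_1}+e^{i\lambda_2}+e^{-i\lambda_2})\bigr|^{-2}\,d\lambda_1\,d\lambda_2<\infty .$$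
   Context: $\Phi$ is $\beta$-Hölder means $|\Phi(x)-\Phi(y)|\le C|x-y|^\beta$ for some $C>0$ and all $x,y\in[0,\tfrac14]$. *)

theory Defs
  imports "HOL-Analysis.Analysis"
begin

definition spec_density :: "real \<Rightarrow> real \<Rightarrow> (real \<Rightarrow> real) \<Rightarrow> real \<times> real \<Rightarrow> real" where
  "spec_density sigma2 alpha Phi l =
     sigma2 / (4 * pi\<^sup>2) *
     (LINT x:{0..1/4}|lborel.
        Phi x * (1/4 - x) powr alpha / (1 - 2 * x * (cos (fst l) + cos (snd l)))\<^sup>2)"

definition holder_on :: "real set \<Rightarrow> real \<Rightarrow> (real \<Rightarrow> real) \<Rightarrow> bool" where
  "holder_on S beta Phi \<longleftrightarrow>
     (\<exists>C>0. \<forall>x\<in>S. \<forall>y\<in>S. \<bar>Phi x - Phi y\<bar> \<le> C * \<bar>x - y\<bar> powr beta)"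

end

theory Submission imports Defs begin


lemma one_minus_cos_le: fixes x :: real assumes "x \<ge> 0" shows "1 - cos x \<le> x\<^sup>2/2"
proof -
  let ?f = "\<lambda>x. x\<^sup>2/2 - (1 - cos x)"
  have "\<And>u. \<lbrakk>0 \<le> u; u \<le> x\<rbrakk> \<Longrightarrow> (?f has_real_derivative u - sin u) (at u)"
    by (auto intro!: derivative_eq_intros simp: field_simps power2_eq_square)
  moreover have "\<And>u::real. 0 \<le> u \<Longrightarrow> u - sin u \<ge> 0" using sin_x_le_x by auto
  ultimately have "?f x \<ge> ?f 0"
    by (intro DERIV_nonneg_imp_nondecreasing [OF assms]) (metis)
  then show ?thesis by simp
qed

lemma sin_ge_cubic: fixes x :: real assumes "x \<ge> 0" shows "x - x^3/6 \<le> sin x"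
proof -
  let ?f = "\<lambda>x. sin x - x + x^3/6"
  have "\<And>u. \<lbrakk>0 \<le> u; u \<le> x\<rbrakk> \<Longrightarrow> (?f has_real_derivative cos u - 1 + u\<^sup>2/2) (at u)"
    by (auto intro!: derivative_eq_intros simp: field_simps power2_eq_square)
  moreover have "\<And>u::real. 0 \<le> u \<Longrightarrow> cos u - 1 + u\<^sup>2/2 \<ge> 0" using one_minus_cos_le by fastforce
  ultimately have "?f x \<ge> ?f 0"
    by (intro DERIV_nonneg_imp_nondecreasing [OF assms]) auto
  then show ?thesis by simp
qed

lemma cos_le_quartic: fixes x :: real assumes "x \<ge> 0" shows "cos x \<le> 1 - x\<^sup>2/2 + x^4/24"
proof -
  let ?f = "\<lambda>x. 1 - x\<^sup>2/2 + x^4/24 - cos x"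
  have "\<And>u. \<lbrakk>0 \<le> u; u \<le> x\<rbrakk> \<Longrightarrow> (?f has_real_derivative sin u - u + u^3/6) (at u)"
    by (auto intro!: derivative_eq_intros simp: field_simps power2_eq_square)
  moreover have "\<And>u::real. 0 \<le> u \<Longrightarrow> sin u - u + u^3/6 \<ge> 0" using sin_ge_cubic by fastforce
  ultimately have "?f x \<ge> ?f 0"
    by (intro DERIV_nonneg_imp_nondecreasing [OF assms]) auto
  then show ?thesis by simp
qed

lemma one_minus_cos_ge: fixes x :: real assumes "\<bar>x\<bar> \<le> pi" shows "x\<^sup>2/20 \<le> 1 - cos x"
proof -
  have c: "cos x \<le> 1 - x\<^sup>2/2 + x^4/24"
    using cos_le_quartic[of "\<bar>x\<bar>"] by (simp add: power2_abs power_abs) 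
  have "x\<^sup>2 \<le> pi\<^sup>2" using assms by (metis abs_ge_zero power2_abs power_mono)
  also have "pi\<^sup>2 \<le> 3.2\<^sup>2" using pi_less_4 pi_approx by (intro power_mono) auto
  finally have "x\<^sup>2 \<le> 10.24" by (simp add: power2_eq_square)
  then have "x\<^sup>2 * (9/20 - x\<^sup>2/24) \<ge> 0" by simp
  then show ?thesis using c by (simp add: algebra_simps power4_eq_xxxx power2_eq_square)
qed


lemma amgm3:
  fixes X Y Z a b c :: real
  assumes "X \<ge> 0" "Y \<ge> 0" "Z \<ge> 0" "a \<ge> 0" "b \<ge> 0" "c \<ge> 0" "a + b + c = 1"
  shows "X powr a * Y powr b * Z powr c \<le> X + Y + Z"
proof -
  let ?S = "X + Y + Z"
  have "X powr a \<le> ?S powr a" using assms by (intro powr_mono2) auto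
  moreover have "Y powr b \<le> ?S powr b" using assms by (intro powr_mono2) auto
  moreover have "Z powr c \<le> ?S powr c" using assms by (intro powr_mono2) auto
  ultimately have "X powr a * Y powr b * Z powr c \<le> ?S powr a * ?S powr b * ?S powr c"
    by (intro mult_mono) auto
  also have "\<dots> = ?S powr (a+b+c)" by (simp add: powr_add)
  also have "\<dots> \<le> ?S" using assms by (cases "?S = 0") auto
  finally show ?thesis .
qed

lemma D_bound:
  fixes x l1 l2 :: real
  assumes "0 \<le> x" "x \<le> 1/4" "\<bar>l1\<bar> \<le> pi" "\<bar>l2\<bar> \<le> pi"
    and c1: "l1\<^sup>2/20 \<le> 1 - cos l1" and c2: "l2\<^sup>2/20 \<le> 1 - cos l2"
  shows "(4*(1/4 - x) + l1\<^sup>2/20 + l2\<^sup>2/20) / 9 \<le> 1 - 2 * x * (cos l1 + cos l2)"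
proof -
  define s where "s = (1 - cos l1) + (1 - cos l2)"
  have s0: "0 \<le> s" "s \<le> 4" unfolding s_def using cos_le_one[of l1] cos_le_one[of l2]
    cos_ge_minus_one[of l1] cos_ge_minus_one[of l2] by linarith+
  have D: "1 - 2 * x * (cos l1 + cos l2) = 4 * (1/4 - x) + 2 * x * s" unfolding s_def by (simp add: algebra_simps)
  have "(4*(1/4 - x) + s) / 9 \<le> 4 * (1/4 - x) + 2 * x * s"
  proof (cases "x \<ge> 1/8")
    case True
    have "2 * (1/8) * s \<le> 2 * x * s" using True s0 by (intro mult_right_mono) auto
    moreover have "4 * (1/4 - x) \<ge> 0" using assms by simp
    ultimately show ?thesis using s0 by (simp add: field_simps)
  next
    case False
    then have "2 * x * s \<ge> 0" using s0 assms by simp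
    moreover have "4 * (1/4 - x) \<ge> 1/2" using False by simp
    ultimately show ?thesis using s0 by (simp add: field_simps)
  qed
  moreover have "l1\<^sup>2/20 + l2\<^sup>2/20 \<le> s" using c1 c2 s_def by linarith
  ultimately show ?thesis using D by (simp add: field_simps)
qed


lemma sq_powr: fixes a e :: real assumes "a \<ge> 0" shows "(a powr e)\<^sup>2 = a powr (2*e)"
  using assms by (simp add: power2_eq_square powr_add[symmetric])

lemma P_sq:
  fixes l1 l2 t p :: real assumes "t > 0" "l1 \<noteq> 0" "l2 \<noteq> 0"
  shows "((l1\<^sup>2/20) powr (p/4) * (l2\<^sup>2/20) powr (p/4) * (4*t) powr (1 - p/2))\<^sup>2
     = \<bar>l1\<bar> powr p * \<bar>l2\<bar> powr p * t powr (2-p) * (4 powr (2-p) / 20 powr p)"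
proof -
  have e1: "((l1\<^sup>2/20) powr (p/4))\<^sup>2 = \<bar>l1\<bar> powr p / 20 powr (p/2)"
  proof -
    have "((l1\<^sup>2/20) powr (p/4))\<^sup>2 = (l1\<^sup>2/20) powr (p/2)" by (subst sq_powr) auto
    also have "\<dots> = (\<bar>l1\<bar> powr 2) powr (p/2) / 20 powr (p/2)"
    proof -
      have sq: "l1\<^sup>2 = \<bar>l1\<bar> powr 2" using assms by (simp add: powr_numeral)
      show ?thesis unfolding sq by (simp add: powr_divide)
    qed
    also have "\<dots> = \<bar>l1\<bar> powr p / 20 powr (p/2)" by (simp only: powr_powr) simp
    finally show ?thesis .
  qed
  have e2: "((l2\<^sup>2/20) powr (p/4))\<^sup>2 = \<bar>l2\<bar> powr p / 20 powr (p/2)"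
  proof -
    have "((l2\<^sup>2/20) powr (p/4))\<^sup>2 = (l2\<^sup>2/20) powr (p/2)" by (subst sq_powr) auto
    also have "\<dots> = (\<bar>l2\<bar> powr 2) powr (p/2) / 20 powr (p/2)"
    proof -
      have sq: "l2\<^sup>2 = \<bar>l2\<bar> powr 2" using assms by (simp add: powr_numeral)
      show ?thesis unfolding sq by (simp add: powr_divide)
    qed
    also have "\<dots> = \<bar>l2\<bar> powr p / 20 powr (p/2)" by (simp only: powr_powr) simp
    finally show ?thesis .
  qed
  have e3: "((4*t) powr (1 - p/2))\<^sup>2 = 4 powr (2-p) * t powr (2-p)"
    using assms by (subst sq_powr) (auto simp: powr_mult algebra_simps)
  have e4: "20 powr (p/2) * 20 powr (p/2) = (20::real) powr p" by (simp add: powr_add[symmetric])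
  show ?thesis unfolding power_mult_distrib e1 e2 e3 using e4
    by (simp add: field_simps)
qed


lemma ptwise:
  fixes x l1 l2 p alpha phi M :: real
  assumes x: "0 \<le> x" "x < 1/4" and l: "\<bar>l1\<bar> \<le> pi" "\<bar>l2\<bar> \<le> pi" "l1 \<noteq> 0" "l2 \<noteq> 0"
    and p: "0 < p" "p < 1" and phi: "0 \<le> phi" "phi \<le> M"
  shows "phi * (1/4 - x) powr alpha / (1 - 2 * x * (cos l1 + cos l2))\<^sup>2
     \<le> (81 * M * 20 powr p / 4 powr (2-p)) * ((1/4 - x) powr (alpha - 2 + p) * (\<bar>l1\<bar> powr (-p) * \<bar>l2\<bar> powr (-p)))"
proof -
  define t where "t = 1/4 - x"
  have t: "t > 0" using x t_def by simp
  define P where "P = (l1\<^sup>2/20) powr (p/4) * (l2\<^sup>2/20) powr (p/4) * (4*t) powr (1 - p/2)"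
  define D where "D = 1 - 2 * x * (cos l1 + cos l2)"
  have Ppos: "P > 0" unfolding P_def using l t by simp
  have "P \<le> l1\<^sup>2/20 + l2\<^sup>2/20 + 4*t" unfolding P_def
    by (rule amgm3) (use p t in auto)
  also have "\<dots> \<le> 9 * D" using D_bound[OF x(1) _ l(1,2) one_minus_cos_ge[OF l(1)] one_minus_cos_ge[OF l(2)]] x
    unfolding D_def t_def by (simp add: field_simps)
  finally have PD: "P \<le> 9 * D" .
  then have Dpos: "D > 0" using Ppos by simp
  have P2: "P\<^sup>2 \<le> 81 * D\<^sup>2" using PD Ppos power_mono[OF PD, of 2] by (simp add: power_mult_distrib)
  have "phi * t powr alpha / D\<^sup>2 \<le> M * t powr alpha / D\<^sup>2"
    using phi by (intro divide_right_mono mult_right_mono) auto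
  also have "\<dots> \<le> M * t powr alpha / (P\<^sup>2 / 81)"
    using P2 Ppos phi Dpos by (intro divide_left_mono mult_nonneg_nonneg) auto
  also have "\<dots> = 81 * M * t powr alpha / P\<^sup>2" by simp
  also have "\<dots> = 81 * M * t powr alpha / (\<bar>l1\<bar> powr p * \<bar>l2\<bar> powr p * t powr (2-p) * (4 powr (2-p) / 20 powr p))"
    unfolding P_def using P_sq[OF t l(3,4)] by simp
  also have "\<dots> = (81 * M * 20 powr p / 4 powr (2-p)) * ((t powr alpha / t powr (2-p)) * (\<bar>l1\<bar> powr (-p) * \<bar>l2\<bar> powr (-p)))"
    by (simp add: powr_minus field_simps)
  also have "t powr alpha / t powr (2-p) = t powr (alpha - 2 + p)"
    by (simp add: powr_diff[symmetric] algebra_simps)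
  finally show ?thesis unfolding t_def D_def .
qed


lemma nn_powr_from_0_finite:
  fixes q c :: real assumes "q > -1" "c \<ge> 0"
  shows "(\<integral>\<^sup>+ y. ennreal (indicator {0..c} y * y powr q) \<partial>lborel) < \<infinity>"
proof -
  have "((\<lambda>y. y powr q) has_integral (c powr (q+1) / (q+1))) {0..c}"
    by (rule has_integral_powr_from_0) (use assms in auto)
  then have "((\<lambda>y. if y \<in> {0..c} then y powr q else 0) has_integral (c powr (q+1) / (q+1))) UNIV"
    by (subst has_integral_restrict_UNIV)
  moreover have "(\<lambda>y. if y \<in> {0..c} then y powr q else 0) = (\<lambda>y. indicator {0..c} y * y powr q)"
    by (auto simp: indicator_def)
  ultimately have "((\<lambda>y. indicator {0..c} y * y powr q) has_integral (c powr (q+1) / (q+1))) UNIV"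
    by simp
  then have "integral\<^sup>N lborel (\<lambda>y. indicator {0..c} y * y powr q) = c powr (q+1) / (q+1)"
    by (intro nn_integral_has_integral_lborel) (auto simp: indicator_def)
  then show ?thesis by simp
qed

lemma nn_powr_to_end_finite:
  fixes q :: real assumes "q > -1"
  shows "(\<integral>\<^sup>+ x. ennreal (indicator {0..1/4} x * (1/4 - x) powr q) \<partial>lborel) < \<infinity>"
proof -
  define f where "f = (\<lambda>x::real. ennreal (indicator {0..1/4} x * (1/4 - x) powr q))"
  have fm: "f \<in> borel_measurable borel" unfolding f_def by measurable
  have "integral\<^sup>N lborel f = (\<integral>\<^sup>+ x. f (1/4 + -1 * x) \<partial>lborel)"
    using nn_integral_real_affine[OF fm, of "-1" "1/4"] by simp
  also have "(\<lambda>x::real. f (1/4 + -1 * x)) = (\<lambda>x. ennreal (indicator {0..1/4} x * x powr q))"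
    by (rule ext) (auto simp: f_def indicator_def)
  finally show ?thesis using nn_powr_from_0_finite[OF assms, of "1/4"] unfolding f_def by simp
qed

lemma nn_abs_powr_finite:
  fixes p :: real assumes "0 < p" "p < 1"
  shows "(\<integral>\<^sup>+ l. ennreal (indicator {-pi..pi} l * \<bar>l\<bar> powr (-p)) \<partial>lborel) < \<infinity>"
proof -
  define g where "g = (\<lambda>y::real. ennreal (indicator {0..pi} y * y powr (-p)))"
  have gm: "g \<in> borel_measurable borel" unfolding g_def by measurable
  have "(\<integral>\<^sup>+ l. ennreal (indicator {-pi..pi} l * \<bar>l\<bar> powr (-p)) \<partial>lborel)
      \<le> (\<integral>\<^sup>+ l. g l + g (0 + -1 * l) \<partial>lborel)"
    by (intro nn_integral_mono) (auto simp: g_def indicator_def)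
  also have "\<dots> = (\<integral>\<^sup>+ l. g l \<partial>lborel) + (\<integral>\<^sup>+ l. g (0 + -1 * l) \<partial>lborel)"
    using gm by (intro nn_integral_add) auto
  also have "(\<integral>\<^sup>+ l. g (0 + -1 * l) \<partial>lborel) = (\<integral>\<^sup>+ l. g l \<partial>lborel)"
    using nn_integral_real_affine[OF gm, of "-1" 0] by simp
  finally have le: "(\<integral>\<^sup>+ l. ennreal (indicator {-pi..pi} l * \<bar>l\<bar> powr (-p)) \<partial>lborel)
      \<le> (\<integral>\<^sup>+ l. g l \<partial>lborel) + (\<integral>\<^sup>+ l. g l \<partial>lborel)" .
  have "(\<integral>\<^sup>+ l. g l \<partial>lborel) < \<infinity>" unfolding g_def
    by (rule nn_powr_from_0_finite) (use assms in auto)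
  then show ?thesis using le by (simp add: ennreal_add_less_top le_less_trans)
qed

lemma H_meas: fixes PhiI :: "real \<Rightarrow> real" and alpha :: real and B :: "(real\<times>real) set"
  assumes [measurable]: "PhiI \<in> borel_measurable lborel" and "closed B"
  shows "(\<lambda>(l::real \<times> real, x::real). indicator B l * c *
      (PhiI x * ((1/4 - x) powr alpha / (1 - 2 * x * (cos (fst l) + cos (snd l)))\<^sup>2))) \<in> borel_measurable (lborel \<Otimes>\<^sub>M lborel)"
proof -
  have Bs[measurable]: "B \<in> sets borel" using assms(2) by (simp add: borel_closed)
  have 1: "(\<lambda>z::(real\<times>real)\<times>real. indicator B (fst z) * c) \<in> borel_measurable (lborel \<Otimes>\<^sub>M lborel)"
    by measurable
  have 2: "(\<lambda>z::(real\<times>real)\<times>real. PhiI (snd z)) \<in> borel_measurable (lborel \<Otimes>\<^sub>M lborel)"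
    by measurable
  have f1: "(\<lambda>l::real\<times>real. cos (fst l) + cos (snd l)) \<in> borel_measurable lborel"
    unfolding measurable_lborel2 by (intro borel_measurable_continuous_onI continuous_intros)
  have f2[measurable]: "(\<lambda>z::(real\<times>real)\<times>real. cos (fst (fst z)) + cos (snd (fst z))) \<in> borel_measurable (lborel \<Otimes>\<^sub>M lborel)"
    by (rule measurable_compose[OF measurable_fst f1])
  have 3: "(\<lambda>z::(real\<times>real)\<times>real. (1/4 - snd z) powr alpha / (1 - 2 * snd z * (cos (fst (fst z)) + cos (snd (fst z))))\<^sup>2) \<in> borel_measurable (lborel \<Otimes>\<^sub>M lborel)"
    by measurable
  have "(\<lambda>z. (indicator B (fst z) * c) * (PhiI (snd z) * ((1/4 - snd z) powr alpha / (1 - 2 * snd z * (cos (fst (fst z)) + cos (snd (fst z))))\<^sup>2))) \<in> borel_measurable (lborel \<Otimes>\<^sub>M lborel)"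
    using 1 2 3 by (intro borel_measurable_times) auto
  then show ?thesis by (simp add: case_prod_beta')
qed


theorem mainTheorem2:
  fixes alpha sigma2 :: real and Phi :: "real \<Rightarrow> real"
  assumes "alpha > 0"
    and "sigma2 > 0"
    and "set_borel_measurable lborel {0..1/4} Phi"
    and "bounded (Phi ` {0..1/4})"
    and "\<forall>x\<in>{0..1/4}. Phi x \<ge> 0"
    and "continuous (at (1/4) within {0..1/4}) Phi"
    and "Phi (1/4) \<noteq> 0"
    and "alpha = 1 \<Longrightarrow> \<exists>beta>0. holder_on {0..1/4} beta Phi"
  shows "set_integrable lborel ({-pi..pi} \<times> {-pi..pi}) (spec_density sigma2 alpha Phi)"
proof -
  define PhiI where "PhiI = (\<lambda>x::real. indicator {0..1/4} x *\<^sub>R Phi x)"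
  have PhiIm[measurable]: "PhiI \<in> borel_measurable lborel"
    using assms(3) unfolding PhiI_def set_borel_measurable_def .
  obtain M where M0': "\<forall>x\<in>{0..1/4}. \<bar>Phi x\<bar> \<le> M"
    using assms(4) unfolding bounded_iff by auto
  have M: "\<And>x. x \<in> {0..1/4} \<Longrightarrow> \<bar>Phi x\<bar> \<le> M" using M0' by blast
  have M0: "M \<ge> 0" using M[of 0] by auto
  define p where "p = 1 - min alpha 1 / 2"
  have p: "0 < p" "p < 1" using assms(1) unfolding p_def by (auto simp: min_def)
  define q where "q = alpha - 2 + p"
  have q: "q > -1" using assms(1) unfolding q_def p_def by (auto simp: min_def)
  define K where "K = 81 * M * 20 powr p / 4 powr (2-p)"
  have K0: "K \<ge> 0" unfolding K_def using M0 by simp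
  define c where "c = sigma2 / (4 * pi\<^sup>2)"
  have c0: "c \<ge> 0" unfolding c_def using assms(2) by simp
  define B where "B = ({-pi..pi} \<times> {-pi..pi} :: (real \<times> real) set)"
  define u where "u = (\<lambda>l::real. indicator {-pi..pi} l * \<bar>l\<bar> powr (-p))"
  define h where "h = (\<lambda>x::real. indicator {0..1/4} x * (1/4 - x) powr q)"
  have u0: "\<And>l. u l \<ge> 0" unfolding u_def by auto
  have h0: "\<And>x. h x \<ge> 0" unfolding h_def by auto
  have um[measurable]: "u \<in> borel_measurable borel" unfolding u_def by measurable
  have hm[measurable]: "h \<in> borel_measurable borel" unfolding h_def by measurable
  define H where "H = (\<lambda>(l::real \<times> real, x::real). indicator B l * c *
      (PhiI x * ((1/4 - x) powr alpha / (1 - 2 * x * (cos (fst l) + cos (snd l)))\<^sup>2)))"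
  have Hm[measurable]: "H \<in> borel_measurable (lborel \<Otimes>\<^sub>M lborel)"
    unfolding H_def by (rule H_meas[OF PhiIm]) (simp add: B_def closed_Times)
  have eq: "(\<lambda>l. indicator B l *\<^sub>R spec_density sigma2 alpha Phi l) = (\<lambda>l. \<integral>x. H (l, x) \<partial>lborel)"
  proof
    fix l :: "real \<times> real"
    have "(\<lambda>x. H (l, x)) = (\<lambda>x. (indicator B l * c) * (indicator {0..1/4} x *\<^sub>R
        (Phi x * (1/4 - x) powr alpha / (1 - 2 * x * (cos (fst l) + cos (snd l)))\<^sup>2)))"
      by (rule ext) (simp add: H_def PhiI_def)
    then have "(\<integral>x. H (l, x) \<partial>lborel) = (indicator B l * c) * (\<integral>x. (indicator {0..1/4} x *\<^sub>R
        (Phi x * (1/4 - x) powr alpha / (1 - 2 * x * (cos (fst l) + cos (snd l)))\<^sup>2)) \<partial>lborel)"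
      by (simp only: integral_mult_right_zero)
    then show "indicator B l *\<^sub>R spec_density sigma2 alpha Phi l = (\<integral>x. H (l, x) \<partial>lborel)"
      by (simp only: spec_density_def set_lebesgue_integral_def c_def real_scaleR_def mult.assoc)
  qed
  have bound: "norm (H ((l1, l2), x)) \<le> c * K * u l1 * u l2 * h x"
    if "l1 \<noteq> 0" "l2 \<noteq> 0" for l1 l2 x
  proof -
    have rhs0: "c * K * u l1 * u l2 * h x \<ge> 0" using c0 K0 u0 h0 by simp
    show ?thesis
    proof (cases "(l1, l2) \<in> B \<and> x \<in> {0..<1/4}")
      case False
      moreover have "x = 1/4 \<Longrightarrow> H ((l1, l2), x) = 0" by (simp add: H_def)
      ultimately have "H ((l1, l2), x) = 0" by (auto simp: H_def PhiI_def indicator_def)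
      then show ?thesis using rhs0 by simp
    next
      case True
      then have x: "0 \<le> x" "x < 1/4" and l: "\<bar>l1\<bar> \<le> pi" "\<bar>l2\<bar> \<le> pi" by (auto simp: B_def)
      have ph: "0 \<le> Phi x" "Phi x \<le> M" using assms(5) M[of x] x by auto
      have Heq: "H ((l1, l2), x) = c * (Phi x * (1/4 - x) powr alpha / (1 - 2 * x * (cos l1 + cos l2))\<^sup>2)"
        using True by (simp add: H_def PhiI_def)
      define G where "G = Phi x * (1/4 - x) powr alpha / (1 - 2 * x * (cos l1 + cos l2))\<^sup>2"
      have GK: "G \<le> K * ((1/4 - x) powr q * (\<bar>l1\<bar> powr (-p) * \<bar>l2\<bar> powr (-p)))"
        unfolding K_def q_def G_def by (rule ptwise[OF x l that p ph])
      have G0: "0 \<le> G" unfolding G_def using ph by simp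
      have ue: "u l1 = \<bar>l1\<bar> powr (-p)" "u l2 = \<bar>l2\<bar> powr (-p)" "h x = (1/4 - x) powr q"
        using l x by (auto simp: u_def h_def indicator_def abs_le_iff)
      have "norm (H ((l1, l2), x)) = c * G" unfolding Heq G_def[symmetric] using c0 G0 by simp
      also have "\<dots> \<le> c * (K * ((1/4 - x) powr q * (\<bar>l1\<bar> powr (-p) * \<bar>l2\<bar> powr (-p))))"
        using GK c0 by (rule mult_left_mono)
      also have "\<dots> = c * K * u l1 * u l2 * h x" unfolding ue by (simp add: mult_ac)
      finally show ?thesis .
    qed
  qed
  define Iu where "Iu = (\<integral>\<^sup>+ l. ennreal (u l) \<partial>lborel)"
  define Ih where "Ih = (\<integral>\<^sup>+ x. ennreal (h x) \<partial>lborel)"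
  have Iu: "Iu < \<infinity>" unfolding Iu_def u_def by (rule nn_abs_powr_finite[OF p])
  have Ih: "Ih < \<infinity>" unfolding Ih_def h_def by (rule nn_powr_to_end_finite[OF q])
  define F where "F = (\<lambda>l. \<integral>\<^sup>+ x. ennreal (norm (H (l, x))) \<partial>lborel)"
  have Fm: "F \<in> borel_measurable (lborel \<Otimes>\<^sub>M lborel)"
    unfolding F_def lborel_prod by (rule lborel.borel_measurable_nn_integral_fst) measurable
  have inner: "F (l1, l2) \<le> ennreal (c * K * u l1) * ennreal (u l2) * Ih"
    if "l1 \<noteq> 0" "l2 \<noteq> 0" for l1 l2
  proof -
    have "F (l1, l2) \<le> (\<integral>\<^sup>+ x. ennreal (c * K * u l1 * u l2) * ennreal (h x) \<partial>lborel)"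
      unfolding F_def using bound[OF that] c0 K0 u0 h0
      by (intro nn_integral_mono) (simp add: ennreal_mult[symmetric] ennreal_leI)
    also have "\<dots> = ennreal (c * K * u l1 * u l2) * Ih"
      unfolding Ih_def by (rule nn_integral_cmult) measurable
    also have "\<dots> = ennreal (c * K * u l1) * ennreal (u l2) * Ih"
      using c0 K0 u0 by (simp add: ennreal_mult)
    finally show ?thesis .
  qed
  have mid: "(\<integral>\<^sup>+ l2. F (l1, l2) \<partial>lborel) \<le> ennreal (c * K * u l1) * Iu * Ih"
    if "l1 \<noteq> 0" for l1
  proof -
    have "(\<integral>\<^sup>+ l2. F (l1, l2) \<partial>lborel) \<le> (\<integral>\<^sup>+ l2. ennreal (c * K * u l1) * ennreal (u l2) * Ih \<partial>lborel)"
      using AE_lborel_singleton[of 0] by (intro nn_integral_mono_AE) (auto elim!: eventually_mono intro: inner[OF that])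
    also have "\<dots> = ennreal (c * K * u l1) * Iu * Ih"
      unfolding Iu_def by (simp add: nn_integral_multc nn_integral_cmult)
    finally show ?thesis .
  qed
  have "(\<integral>\<^sup>+ z. ennreal (norm (H z)) \<partial>(lborel \<Otimes>\<^sub>M lborel)) = (\<integral>\<^sup>+ l. F l \<partial>lborel)"
    unfolding F_def by (rule lborel.nn_integral_fst[symmetric]) measurable
  also have "\<dots> = (\<integral>\<^sup>+ l. F l \<partial>(lborel \<Otimes>\<^sub>M lborel))" by (simp add: lborel_prod)
  also have "\<dots> = (\<integral>\<^sup>+ l1. \<integral>\<^sup>+ l2. F (l1, l2) \<partial>lborel \<partial>lborel)"
    by (rule lborel.nn_integral_fst[symmetric]) (rule Fm)
  also have "\<dots> \<le> (\<integral>\<^sup>+ l1. ennreal (c * K * u l1) * Iu * Ih \<partial>lborel)"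
    using AE_lborel_singleton[of 0] by (intro nn_integral_mono_AE) (auto elim!: eventually_mono intro: mid)
  also have "\<dots> = ennreal (c * K) * Iu * Iu * Ih"
    unfolding Iu_def using c0 K0 u0
    by (simp add: nn_integral_multc nn_integral_cmult ennreal_mult)
  also have "\<dots> < \<infinity>" using Iu Ih by (simp add: ennreal_mult_less_top)
  finally have "integrable (lborel \<Otimes>\<^sub>M lborel) H"
    by (intro integrableI_bounded Hm)
  then have "integrable lborel (\<lambda>l. \<integral>x. H (l, x) \<partial>lborel)"
    by (rule lborel_pair.integrable_fst')
  then show ?thesis unfolding set_integrable_def eq[symmetric] B_def .
qed

end
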